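(* Let $\mathbb S=\{(X_1,X_2,A)\in\mathbb C^2\times\mathbb R: -2\,\mathrm{Re}(X_1+X_2)-2\,\mathrm{Re}(X_1\overline{X}_2e^{-2iA})+|X_1|^2+|X_2|^2+1=0\}$ and $\mathbb S_{124}=\{(X_1,X_2,A)\in\mathbb C^2\times\mathbb R:\mathrm{Re}(\overline{X}_1e^{iA})=0\}$. Writing $X_1=a+bi$, $X_2=c+di$, the intersection $\mathbb S\cap\mathbb S_{124}$ is not transversal; it is a union of $2$-dimensional real analytic varieties, given by the equations $a+b\tan A=0$, $a+c=1$, $b-d=0$ where $A\ne\pm\pi/2+2k\pi$, and by $a+c=1$, $b=0$, $d=0$ where $A=\pm\pi/2+2k\pi$ ($k\in\mathbb Z$). *)

theory Defs
  imports "HOL-Analysis.Analysis"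
begin

definition FS :: "complex \<times> complex \<times> real \<Rightarrow> real" where
  "FS = (\<lambda>(X1, X2, A). - 2 * Re (X1 + X2) - 2 * Re (X1 * cnj X2 * exp (- 2 * \<i> * of_real A))
          + (cmod X1)\<^sup>2 + (cmod X2)\<^sup>2 + 1)"

definition F124 :: "complex \<times> complex \<times> real \<Rightarrow> real" where
  "F124 = (\<lambda>(X1, X2, A). Re (cnj X1 * exp (\<i> * of_real A)))"

definition SS :: "(complex \<times> complex \<times> real) set" where
  "SS = {p. FS p = 0}"

definition SS124 :: "(complex \<times> complex \<times> real) set" where
  "SS124 = {p. F124 p = 0}"

definition transversal_at ::
  "('a::real_normed_vector \<Rightarrow> real) \<Rightarrow> ('a \<Rightarrow> real) \<Rightarrow> 'a \<Rightarrow> bool" where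
  "transversal_at F G p \<longleftrightarrow>
     (\<exists>F' G'. (F has_derivative F') (at p) \<and> (G has_derivative G') (at p) \<and>
        (\<forall>s t. (\<forall>v. s * F' v + t * G' v = 0) \<longrightarrow> s = 0 \<and> t = 0))"

definition transversal_intersection ::
  "('a::real_normed_vector \<Rightarrow> real) \<Rightarrow> ('a \<Rightarrow> real) \<Rightarrow> bool" where
  "transversal_intersection F G \<longleftrightarrow> (\<forall>p. F p = 0 \<and> G p = 0 \<longrightarrow> transversal_at F G p)"

end

theory Submission imports Defs begin
lemma FS_pt: "FS (X1, X2, A) = (- 2 * (Re X1 + Re X2) - 2 * ((Re X1 * Re X2 + Im X1 * Im X2) * cos (2 * A) + (Im X1 * Re X2 - Re X1 * Im X2) * sin (2 * A)) + (Re X1)^2 + (Im X1)^2 + (Re X2)^2 + (Im X2)^2 + 1)"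
proof -
  have r: "Re (exp (- 2 * \<i> * of_real A)) = cos (2*A)" "Im (exp (- 2 * \<i> * of_real A)) = - sin (2*A)"
    by (simp_all add: Re_exp Im_exp)
  have g: "Re (X1 * cnj X2 * E) = (Re X1 * Re X2 + Im X1 * Im X2) * Re E - (Im X1 * Re X2 - Re X1 * Im X2) * Im E" for E
    by (simp add: algebra_simps)
  show ?thesis unfolding FS_def prod.case g r by (simp add: cmod_power2 algebra_simps)
qed

lemma FS_real: "FS = (\<lambda>x. - 2 * (Re (fst x) + Re (fst (snd x)))
   - 2 * ((Re (fst x) * Re (fst (snd x)) + Im (fst x) * Im (fst (snd x))) * cos (2 * snd (snd x))
         + (Im (fst x) * Re (fst (snd x)) - Re (fst x) * Im (fst (snd x))) * sin (2 * snd (snd x)))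
   + (Re (fst x))^2 + (Im (fst x))^2 + (Re (fst (snd x)))^2 + (Im (fst (snd x)))^2 + 1)"
  by (rule ext) (auto simp: FS_pt)

lemma F124_pt: "F124 (X1, X2, A) = Re X1 * cos A + Im X1 * sin A"
  by (simp add: F124_def exp_Euler cos_of_real sin_of_real flip: of_real_mult)
lemma F124_real: "F124 = (\<lambda>x. Re (fst x) * cos (snd (snd x)) + Im (fst x) * sin (snd (snd x)))"
  by (rule ext) (auto simp: F124_pt)

lemma nt: "\<not> transversal_at FS F124 (0, 1, 0)"
proof
  assume "transversal_at FS F124 (0, 1, 0)"
  then obtain F' G' where d1: "(FS has_derivative F') (at (0,1,0))" and d2: "(F124 has_derivative G') (at (0,1,0))"
    and ind: "\<forall>s t. (\<forall>v. s * F' v + t * G' v = 0) \<longrightarrow> s = 0 \<and> t = 0"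
    unfolding transversal_at_def by blast
  have e1: "(FS has_derivative (\<lambda>v. -4 * Re (fst v))) (at (0,1,0))"
    unfolding FS_real
    apply (rule derivative_eq_intros refl | simp)+
    done
  have e2: "(F124 has_derivative (\<lambda>v. Re (fst v))) (at (0,1,0))"
    unfolding F124_real
    apply (rule derivative_eq_intros refl | simp)+
    done
  have "F' = (\<lambda>v. -4 * Re (fst v))" using has_derivative_unique[OF d1 e1] .
  moreover have "G' = (\<lambda>v. Re (fst v))" using has_derivative_unique[OF d2 e2] .
  ultimately show False using ind[rule_format, of 1 4] by simp
qed
lemma cos0: "(\<exists>k::int. A = pi / 2 + 2 * of_int k * pi \<or> A = - pi / 2 + 2 * of_int k * pi) \<longleftrightarrow> cos A = 0"
proof
  assume "\<exists>k::int. A = pi / 2 + 2 * of_int k * pi \<or> A = - pi / 2 + 2 * of_int k * pi"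
  then obtain k :: int where "A = of_int (2*k) * pi + pi / 2 \<or> A = of_int (2*k - 1) * pi + pi/2"
    by (auto simp: algebra_simps)
  then show "cos A = 0" using cos_zero_iff_int2 by blast
next
  assume "cos A = 0"
  then obtain n :: int where n: "A = n * pi + pi/2" using cos_zero_iff_int2 by blast
  show "\<exists>k::int. A = pi / 2 + 2 * of_int k * pi \<or> A = - pi / 2 + 2 * of_int k * pi"
  proof (cases "even n")
    case True
    then obtain k where "n = 2*k" by blast
    then show ?thesis using n by (intro exI[of _ k]) (auto simp: algebra_simps)
  next
    case False
    then obtain k where "n = 2*k+1" using oddE by blast
    then show ?thesis using n by (intro exI[of _ "k+1"]) (auto simp: algebra_simps)
  qed
qed

lemma key:
  fixes a b c d C S :: real
  assumes cs: "C^2 + S^2 = 1" and h: "a*C + b*S = 0"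
  shows "(- 2 * (a + c) - 2 * ((a * c + b * d) * (C^2 - S^2) + (b * c - a * d) * (2*S*C)) + a^2 + b^2 + c^2 + d^2 + 1 = 0)
     \<longleftrightarrow> c = 1 - a \<and> d = b"
proof -
  have eq: "- 2 * (a + c) - 2 * ((a * c + b * d) * (C^2 - S^2) + (b * c - a * d) * (2*S*C)) + a^2 + b^2 + c^2 + d^2 + 1
     = (c*C - d*S - C)^2 + (c*S + d*C - S + a*S - b*C)^2"
  proof -
    have a: "a = (a*S - b*C) * S" using h cs by algebra
    have b: "b = - (a*S - b*C) * C" using h cs by algebra
    define t where "t = a*S - b*C"
    have "a = t*S" "b = -t*C" using a b t_def by auto
    then show ?thesis using cs unfolding t_def[symmetric] 
      by (simp add: power2_eq_square algebra_simps) algebra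
  qed
  show ?thesis
  proof
    assume "- 2 * (a + c) - 2 * ((a * c + b * d) * (C^2 - S^2) + (b * c - a * d) * (2*S*C)) + a^2 + b^2 + c^2 + d^2 + 1 = 0"
    then have "(c*C - d*S - C)^2 + (c*S + d*C - S + a*S - b*C)^2 = 0" using eq by simp
    then have e1: "c*C - d*S = C" and e2: "c*S + d*C = S - a*S + b*C"
      by (smt (verit) sum_power2_eq_zero_iff)+
    have "c = C*(c*C - d*S) + S*(c*S+d*C)" using cs by algebra
    also have "\<dots> = C*C + S*(S - a*S + b*C)" using e1 e2 by simp
    also have "\<dots> = (C^2+S^2) - a*(C^2+S^2) + C*(a*C+b*S)" by (simp add: algebra_simps power2_eq_square)
    also have "\<dots> = 1 - a" using cs h by simp
    finally have "c = 1 - a" .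
    moreover have "d = -S*(c*C - d*S) + C*(c*S+d*C)" using cs by algebra
    moreover have "-S*(c*C - d*S) + C*(c*S+d*C) = b"
    proof -
      have "-S*(c*C - d*S) + C*(c*S+d*C) = -S*C + C*(S - a*S + b*C)" using e1 e2 by simp
      also have "\<dots> = b*(C^2+S^2) - S*(a*C+b*S)" by (simp add: algebra_simps power2_eq_square)
      also have "\<dots> = b" using cs h by simp
      finally show ?thesis .
    qed
    ultimately show "c = 1 - a \<and> d = b" by simp
  next
    assume cd: "c = 1 - a \<and> d = b"
    then have "c*C - d*S - C = -(a*C + b*S)" "c*S + d*C - S + a*S - b*C = 0" unfolding cd[THEN conjunct1] cd[THEN conjunct2] by (simp_all add: algebra_simps)
    then have "(c*C - d*S - C)^2 + (c*S + d*C - S + a*S - b*C)^2 = 0" using h by simp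
    then show "- 2 * (a + c) - 2 * ((a * c + b * d) * (C^2 - S^2) + (b * c - a * d) * (2*S*C)) + a^2 + b^2 + c^2 + d^2 + 1 = 0"
      using eq by simp
  qed
qed
lemma pt_iff:
  "(X1, X2, A) \<in> SS \<inter> SS124 \<longleftrightarrow>
    (Re X1 * cos A + Im X1 * sin A = 0 \<and> Re X2 = 1 - Re X1 \<and> Im X2 = Im X1)"
proof -
  have cs: "(cos A)^2 + (sin A)^2 = 1" by simp
  have c2: "cos (2*A) = (cos A)^2 - (sin A)^2" by (simp add: cos_double)
  have s2: "sin (2*A) = 2 * sin A * cos A" by (simp add: sin_double)
  have e: "FS (X1,X2,A) = - 2 * (Re X1 + Re X2) - 2 * ((Re X1 * Re X2 + Im X1 * Im X2) * ((cos A)^2 - (sin A)^2)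
     + (Im X1 * Re X2 - Re X1 * Im X2) * (2 * sin A * cos A)) + (Re X1)^2 + (Im X1)^2 + (Re X2)^2 + (Im X2)^2 + 1"
    unfolding FS_pt c2 s2 by simp
  show ?thesis
    unfolding SS_def SS124_def using key[OF cs, of "Re X1" "Im X1" "Re X2" "Im X2"]
    by (auto simp: e F124_pt)
qed

theorem proposition3p7:
  shows "\<not> transversal_intersection FS F124 \<and>
    SS \<inter> SS124 =
      {(X1, X2, A). (\<not> (\<exists>k::int. A = pi / 2 + 2 * of_int k * pi \<or> A = - pi / 2 + 2 * of_int k * pi)) \<and>
          Re X1 + Im X1 * tan A = 0 \<and> Re X1 + Re X2 = 1 \<and> Im X1 - Im X2 = 0}
      \<union> {(X1, X2, A). (\<exists>k::int. A = pi / 2 + 2 * of_int k * pi \<or> A = - pi / 2 + 2 * of_int k * pi) \<and>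
          Re X1 + Re X2 = 1 \<and> Im X1 = 0 \<and> Im X2 = 0}" (is "?T \<and> ?L = ?R")
proof
  have "FS (0, 1, 0) = 0" "F124 (0, 1, 0) = 0" by (simp_all add: FS_pt F124_pt)
  then show "\<not> transversal_intersection FS F124"
    unfolding transversal_intersection_def using nt by blast
next
  show "?L = ?R"
  proof (rule set_eqI)
    fix p :: "complex \<times> complex \<times> real"
    obtain X1 X2 A where p: "p = (X1, X2, A)" by (cases p) auto
    show "p \<in> ?L \<longleftrightarrow> p \<in> ?R"
    proof (cases "cos A = 0")
      case True
      then have "sin A = 1 \<or> sin A = -1" using sin_cos_squared_add[of A]
        by (simp add: power2_eq_square) (metis mult_cancel_left1 square_eq_1_iff)
      then have "Re X1 * cos A + Im X1 * sin A = 0 \<longleftrightarrow> Im X1 = 0" using True by auto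
      then show ?thesis unfolding p pt_iff using True cos0[of A] by auto
    next
      case False
      have "Re X1 * cos A + Im X1 * sin A = 0 \<longleftrightarrow> Re X1 + Im X1 * tan A = 0"
        using False by (simp add: tan_def field_simps)
      then show ?thesis unfolding p pt_iff using False cos0[of A] by auto
    qed
  qed
qed

end
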